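(* For complex numbers $\alpha_1,\dots,\alpha_r$ and $\theta_i=t_i\frac{\partial}{\partial t_i}$, \[ \Bigl(\prod_{i<j}(\theta_i-\theta_j)\Bigr)e^{\sum_{i=1}^r\alpha_it_i}=e^{\sum_{i=1}^r\alpha_it_i}\prod_{i<j}(\alpha_it_i-\alpha_jt_j). \] *)

theory Defs
  imports "HOL-Analysis.Analysis"
begin

text \<open>Functions of r complex variables t_1,...,t_r are modelled as
  functions on points t :: nat \<Rightarrow> complex (only coordinates 1..r matter).\<close>

definition partial :: "nat \<Rightarrow> ((nat \<Rightarrow> complex) \<Rightarrow> complex) \<Rightarrow> (nat \<Rightarrow> complex) \<Rightarrow> complex" where
  "partial i f = (\<lambda>t. deriv (\<lambda>s. f (t(i := s))) (t i))"

definition theta :: "nat \<Rightarrow> ((nat \<Rightarrow> complex) \<Rightarrow> complex) \<Rightarrow> (nat \<Rightarrow> complex) \<Rightarrow> complex" where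
  "theta i f = (\<lambda>t. t i * partial i f t)"

definition theta_diff :: "nat \<Rightarrow> nat \<Rightarrow> ((nat \<Rightarrow> complex) \<Rightarrow> complex) \<Rightarrow> (nat \<Rightarrow> complex) \<Rightarrow> complex" where
  "theta_diff i j f = (\<lambda>t. theta i f t - theta j f t)"

definition pairs_list :: "nat \<Rightarrow> (nat \<times> nat) list" where
  "pairs_list r = [(i, j). i \<leftarrow> [1..<r+1], j \<leftarrow> [i+1..<r+1]]"

definition vdm_op :: "nat \<Rightarrow> ((nat \<Rightarrow> complex) \<Rightarrow> complex) \<Rightarrow> (nat \<Rightarrow> complex) \<Rightarrow> complex" where
  "vdm_op r f = foldr (\<lambda>(i, j) g. theta_diff i j g) (pairs_list r) f"

end

theory Submission
  imports Defs "HOL-Computational_Algebra.Polynomial"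
begin


type_synonym tm = "complex \<times> (nat \<Rightarrow> nat)"

fun evL :: "nat set \<Rightarrow> (nat \<Rightarrow> nat \<Rightarrow> complex) \<Rightarrow> tm list \<Rightarrow> complex" where
  "evL I a [] = 0"
| "evL I a ((c,k)#L) = c * (\<Prod>i\<in>I. a i (k i)) + evL I a L"

definition shiftL :: "nat \<Rightarrow> tm list \<Rightarrow> tm list" where
  "shiftL j L = map (\<lambda>(c,k). (c, k(j := Suc (k j)))) L"
definition negL :: "tm list \<Rightarrow> tm list" where
  "negL L = map (\<lambda>(c,k). (-c, k)) L"
definition stepL :: "nat \<Rightarrow> nat \<Rightarrow> tm list \<Rightarrow> tm list" where
  "stepL i j L = shiftL i L @ negL (shiftL j L)"
definition PL :: "(nat \<times> nat) list \<Rightarrow> tm list" where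
  "PL ps = foldr (\<lambda>(i,j) L. stepL i j L) ps [(1, \<lambda>_. 0)]"

lemma PL_Cons: "PL ((i,j)#ps) = stepL i j (PL ps)"
  by (simp add: PL_def)

lemma evL_append[simp]: "evL I a (L @ M) = evL I a L + evL I a M"
  by (induction I a L rule: evL.induct) auto

lemma evL_neg: "evL I a (negL L) = - evL I a L"
  by (induction I a L rule: evL.induct) (auto simp: negL_def)

lemma evL_shift: "evL I a (shiftL j L) = evL I (a(j := \<lambda>m. a j (Suc m))) L"
proof (induction I a L rule: evL.induct)
  case (2 I a c k L)
  have "(\<Prod>i\<in>I. a i ((k(j := Suc (k j))) i)) = (\<Prod>i\<in>I. (a(j := \<lambda>m. a j (Suc m))) i (k i))"
    by (intro prod.cong) auto
  then show ?case using 2 by (simp add: shiftL_def)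
qed (simp add: shiftL_def)

lemma evL_term_cong:
  assumes "\<forall>(c,k)\<in>set L. (\<Prod>i\<in>I. a i (k i)) = (\<Prod>i\<in>I. b i (k i))"
  shows "evL I a L = evL I b L"
  using assms by (induction I a L rule: evL.induct) auto

lemma evL_cong:
  assumes "\<forall>i\<in>I. a i = b i"
  shows "evL I a L = evL I b L"
  by (rule evL_term_cong) (use assms in auto)

lemma evL_scale:
  assumes "finite I" "i \<in> I"
  shows "evL I (a(i := \<lambda>m. c * a i m)) L = c * evL I a L"
proof (induction L)
  case (Cons x L)
  obtain d k where x: "x = (d,k)" by (cases x)
  have "(\<Prod>l\<in>I. (a(i := \<lambda>m. c * a i m)) l (k l)) = c * a i (k i) * (\<Prod>l\<in>I-{i}. (a(i := \<lambda>m. c * a i m)) l (k l))"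
    by (subst prod.remove[OF assms]) simp
  also have "(\<Prod>l\<in>I-{i}. (a(i := \<lambda>m. c * a i m)) l (k l)) = (\<Prod>l\<in>I-{i}. a l (k l))"
    by (intro prod.cong) auto
  also have "c * a i (k i) * (\<Prod>l\<in>I-{i}. a l (k l)) = c * (\<Prod>l\<in>I. a l (k l))"
    using prod.remove[OF assms, of "\<lambda>l. a l (k l)"] by simp
  finally show ?case using Cons x by (simp add: algebra_simps)
qed simp

lemma evL_pow_shift:
  assumes "finite I" "l \<in> I"
  shows "evL I (\<lambda>i m. z i ^ m) (shiftL l L) = z l * evL I (\<lambda>i m. z i ^ m) L"
proof -
  have "(\<lambda>i m. z i ^ m)(l := \<lambda>m. z l ^ Suc m) = (\<lambda>i m. z i ^ m)(l := \<lambda>m. z l * (\<lambda>i m. z i ^ m) l m)"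
    by simp
  then show ?thesis using evL_scale[OF assms] by (simp add: evL_shift)
qed

lemma evL_PL_pow:
  assumes "finite I" "set ps \<subseteq> I \<times> I"
  shows "evL I (\<lambda>i m. z i ^ m) (PL ps) = prod_list (map (\<lambda>(i,j). z i - z j) ps)"
  using assms(2)
proof (induction ps)
  case Nil then show ?case by (simp add: PL_def)
next
  case (Cons p ps)
  obtain i j where p: "p = (i,j)" by (cases p)
  have ij: "i \<in> I" "j \<in> I" using Cons.prems p by auto
  have IH: "evL I (\<lambda>i m. z i ^ m) (PL ps) = prod_list (map (\<lambda>(i,j). z i - z j) ps)"
    using Cons by auto
  show ?case using IH evL_pow_shift[OF assms(1) ij(1)] evL_pow_shift[OF assms(1) ij(2)]
    by (simp add: p PL_Cons stepL_def evL_neg algebra_simps)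
qed

lemma sum_upd_Suc:
  assumes "finite I" "j \<in> I"
  shows "(\<Sum>l\<in>I. (k(j := Suc (k j))) l) = Suc (\<Sum>l\<in>I. k l)"
proof -
  have "(\<Sum>l\<in>I. (k(j := Suc (k j))) l) = Suc (k j) + (\<Sum>l\<in>I-{j}. (k(j := Suc (k j))) l)"
    by (subst sum.remove[OF assms]) simp
  also have "(\<Sum>l\<in>I-{j}. (k(j := Suc (k j))) l) = (\<Sum>l\<in>I-{j}. k l)"
    by (intro sum.cong) auto
  finally show ?thesis using sum.remove[OF assms, of k] by simp
qed

lemma PL_hom:
  assumes "finite I" "set ps \<subseteq> I \<times> I"
  shows "\<forall>(c,k)\<in>set (PL ps). (\<Sum>i\<in>I. k i) = length ps"
  using assms(2)
proof (induction ps)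
  case Nil then show ?case by (simp add: PL_def)
next
  case (Cons p ps)
  obtain i j where p: "p = (i,j)" by (cases p)
  have ij: "i \<in> I" "j \<in> I" using Cons.prems p by auto
  have IH: "\<forall>(c,k)\<in>set (PL ps). (\<Sum>i\<in>I. k i) = length ps" using Cons by auto
  show ?case using IH sum_upd_Suc[OF assms(1) ij(1)] sum_upd_Suc[OF assms(1) ij(2)]
    by (auto simp: p PL_Cons stepL_def shiftL_def negL_def)
qed



definition sw :: "nat \<Rightarrow> nat \<Rightarrow> nat \<Rightarrow> nat" where
  "sw a b i = (if i = a then b else if i = b then a else i)"
definition Prs :: "nat \<Rightarrow> (nat \<times> nat) set" where
  "Prs r = {(i, j). 1 \<le> i \<and> i < j \<and> j \<le> r}"
definition Vs :: "nat \<Rightarrow> (nat \<Rightarrow> complex) \<Rightarrow> complex" where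
  "Vs r z = (\<Prod>(i,j)\<in>Prs r. z i - z j)"

lemma sw_sw[simp]: "sw a b (sw a b x) = x"
  by (auto simp: sw_def)

lemma finite_Prs[simp]: "finite (Prs r)"
proof -
  have "Prs r \<subseteq> {1..r} \<times> {1..r}" by (auto simp: Prs_def)
  then show ?thesis by (rule finite_subset) auto
qed

lemma Vs_adj:
  assumes "1 \<le> a" "a + 1 \<le> r"
  shows "Vs r (z \<circ> sw a (a+1)) = - Vs r z"
proof -
  define R where "R = Prs r - {(a, a+1)}"
  have P: "Prs r = insert (a,a+1) R" and nR: "(a,a+1) \<notin> R"
    using assms by (auto simp: R_def Prs_def)
  have fR: "finite R" by (simp add: R_def)
  let ?g = "\<lambda>(x,y). (sw a (a+1) x, sw a (a+1) y)"
  have mem: "?g p \<in> R" if "p \<in> R" for p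
    using that assms by (cases p) (auto simp: R_def Prs_def sw_def)
  have inv: "?g (?g p) = p" for p by (cases p) auto
  have "(\<Prod>(i,j)\<in>R. (z \<circ> sw a (a+1)) i - (z \<circ> sw a (a+1)) j) = (\<Prod>(i,j)\<in>R. z i - z j)"
    by (rule prod.reindex_bij_witness[where i="?g" and j="?g"])
       (use mem inv in \<open>auto simp: split_beta\<close>)
  moreover have "(z \<circ> sw a (a+1)) a - (z \<circ> sw a (a+1)) (a+1) = - (z a - z (a+1))"
    by (simp add: sw_def)
  ultimately show ?thesis
    unfolding Vs_def P using fR nR by (simp add: algebra_simps sw_def)
qed

lemma Vs_sw_lt:
  assumes "1 \<le> a" "a + 1 + d \<le> r"
  shows "Vs r (z \<circ> sw a (a+1+d)) = - Vs r z"
  using assms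
proof (induction d arbitrary: z)
  case 0
  have "a+1+0 = a+1" by simp
  then show ?case using Vs_adj[of a r z] 0 by (simp only:)
next
  case (Suc d)
  define b where "b = a + 1 + d"
  have eq: "sw a (a + 1 + Suc d) = sw b (b+1) \<circ> sw a b \<circ> sw b (b+1)"
    by (auto simp: fun_eq_iff sw_def b_def)
  have b1: "1 \<le> b" "b + 1 \<le> r" using Suc.prems by (auto simp: b_def)
  have "Vs r (z \<circ> sw a (a + 1 + Suc d)) = Vs r (((z \<circ> sw b (b+1)) \<circ> sw a b) \<circ> sw b (b+1))"
    unfolding eq by (simp add: comp_assoc)
  also have "\<dots> = - Vs r ((z \<circ> sw b (b+1)) \<circ> sw a b)" by (rule Vs_adj[OF b1])
  also have "\<dots> = Vs r (z \<circ> sw b (b+1))"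
    using Suc.IH[of "z \<circ> sw b (b+1)"] Suc.prems by (simp add: b_def comp_def)
  also have "\<dots> = - Vs r z" by (rule Vs_adj[OF b1])
  finally show ?case .
qed

lemma sw_comm: "sw a b = sw b a"
  by (auto simp: fun_eq_iff sw_def)

lemma Vs_sw:
  assumes "i \<in> {1..r}" "j \<in> {1..r}" "i \<noteq> j"
  shows "Vs r (z \<circ> sw i j) = - Vs r z"
proof (cases "i < j")
  case True
  then show ?thesis using Vs_sw_lt[where a=i and d="j - i - 1" and r=r and z=z] assms by auto
next
  case False
  then have "j < i" using assms by auto
  then show ?thesis using Vs_sw_lt[where a=j and d="i - j - 1" and r=r and z=z] assms by (auto simp: sw_comm)
qed


lemma distinct_concat_fst:
  assumes "distinct xs" "\<And>i. distinct (g i)" "\<And>i p. p \<in> set (g i) \<Longrightarrow> fst p = i"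
  shows "distinct (concat (map g xs))"
  using assms(1)
proof (induction xs)
  case (Cons x xs)
  have "set (g x) \<inter> set (concat (map g xs)) = {}"
  proof (rule ccontr)
    assume "set (g x) \<inter> set (concat (map g xs)) \<noteq> {}"
    then obtain p i where p: "p \<in> set (g x)" "i \<in> set xs" "p \<in> set (g i)" by auto
    then have "x = i" using assms(3)[OF p(1)] assms(3)[OF p(3)] by simp
    then show False using Cons.prems p(2) by simp
  qed
  then show ?case using Cons assms(2) by simp
qed simp

lemma pairs_list_concat: "pairs_list r = concat (map (\<lambda>i. map (\<lambda>j. (i,j)) [i+1..<r+1]) [1..<r+1])"
  by (simp add: pairs_list_def)

lemma set_pairs_list: "set (pairs_list r) = Prs r"
proof (intro equalityI subsetI)
  fix p assume "p \<in> set (pairs_list r)"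
  then show "p \<in> Prs r" unfolding pairs_list_concat Prs_def by auto
next
  fix p assume "p \<in> Prs r"
  then obtain a b where p: "p = (a,b)" "1 \<le> a" "a < b" "b \<le> r" by (auto simp: Prs_def)
  have 1: "a \<in> set [1..<r+1]" using p by simp
  have 2: "(a,b) \<in> set (map (\<lambda>j. (a,j)) [a+1..<r+1])" using p by (simp del: upt_Suc)
  show "p \<in> set (pairs_list r)" unfolding pairs_list_concat set_concat set_map
    using 1 2 p(1) by blast
qed

lemma distinct_pairs_list: "distinct (pairs_list r)"
  unfolding pairs_list_concat
  by (rule distinct_concat_fst) (auto simp: distinct_map inj_on_def)

lemma length_pairs_list: "length (pairs_list r) = (\<Sum>i<r. i)"
proof -
  have gen: "length (concat (map (\<lambda>i. map (\<lambda>j. (i,j)) [i+1..<r+1]) xs)) = (\<Sum>i\<leftarrow>xs. r - i)" for xs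
    by (induction xs) auto
  have "length (pairs_list r) = (\<Sum>i\<leftarrow>[1..<r+1]. r - i)"
    unfolding pairs_list_concat gen ..
  also have "\<dots> = (\<Sum>i\<in>{1..<r+1}. r - i)"
    by (simp only: sum_list_distinct_conv_sum_set distinct_upt set_upt)
  also have "\<dots> = (\<Sum>i<r. i)"
    by (rule sum.reindex_bij_witness[where i="\<lambda>i. r - i" and j="\<lambda>i. r - i"]) auto
  finally show ?thesis .
qed

lemma Vs_list: "prod_list (map (\<lambda>(i,j). z i - z j) (pairs_list r)) = Vs r z"
  unfolding Vs_def
  using prod.distinct_set_conv_list[OF distinct_pairs_list, of "\<lambda>(i,j). z i - z j" r]
  by (simp add: set_pairs_list)



lemma evL_empty: "evL {} a L = evL {} b L"
  by (induction "{}::nat set" a L rule: evL.induct) auto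

lemma evL_split:
  assumes "finite J" "j \<notin> J" "\<forall>(c,k)\<in>set L. k j \<le> D"
  shows "evL (insert j J) a L = (\<Sum>m\<le>D. a j m * evL J a (filter (\<lambda>(c,k). k j = m) L))"
  using assms(3)
proof (induction L)
  case Nil then show ?case by simp
next
  case (Cons x L)
  obtain c k where x: "x = (c,k)" by (cases x)
  have kj: "k j \<le> D" using Cons.prems x by auto
  have IH: "evL (insert j J) a L = (\<Sum>m\<le>D. a j m * evL J a (filter (\<lambda>(c,k). k j = m) L))"
    using Cons by auto
  have "(\<Sum>m\<le>D. a j m * evL J a (filter (\<lambda>(c,k). k j = m) (x#L)))
      = (\<Sum>m\<le>D. (if m = k j then a j m * (c * (\<Prod>i\<in>J. a i (k i))) else 0)
                + a j m * evL J a (filter (\<lambda>(c,k). k j = m) L))"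
    by (intro sum.cong) (auto simp: x algebra_simps)
  also have "\<dots> = a j (k j) * (c * (\<Prod>i\<in>J. a i (k i))) + (\<Sum>m\<le>D. a j m * evL J a (filter (\<lambda>(c,k). k j = m) L))"
    using kj by (simp add: sum.distrib)
  finally show ?case using IH assms(1,2) x by (simp add: algebra_simps)
qed

lemma le_sum_list_map: "x \<in> set M \<Longrightarrow> (f x :: nat) \<le> sum_list (map f M)"
  by (induction M) auto

lemma evL_unique:
  assumes "finite I"
  shows "(\<forall>z. evL I (\<lambda>i m. z i ^ m) L = evL I (\<lambda>i m. z i ^ m) L') \<Longrightarrow> evL I a L = evL I a L'"
  using assms
proof (induction I arbitrary: L L' rule: finite_induct)
  case empty
  then show ?case by (metis evL_empty)
next
  case (insert j J)
  define D where "D = sum_list (map (\<lambda>(c,k). k j) (L @ L'))"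
  have bnd: "\<forall>(c,k)\<in>set M. k j \<le> D" if "set M \<subseteq> set (L @ L')" for M
  proof -
    have "\<forall>(c,k)\<in>set (L @ L'). k j \<le> D"
      unfolding D_def using le_sum_list_map[of _ "L @ L'" "\<lambda>(c,k). k j"] by fastforce
    then show ?thesis using that by auto
  qed
  have bL: "\<forall>(c,k)\<in>set L. k j \<le> D" and bL': "\<forall>(c,k)\<in>set L'. k j \<le> D"
    using bnd[of L] bnd[of L'] by auto
  let ?F = "\<lambda>M m. filter (\<lambda>(c,k). k j = m) M"
  have eqm: "evL J (\<lambda>i m. w i ^ m) (?F L m) = evL J (\<lambda>i m. w i ^ m) (?F L' m)"
    if "m \<le> D" for m w
  proof -
    have "\<forall>x::complex. (\<Sum>m\<le>D. evL J (\<lambda>i m. w i ^ m) (?F L m) * x ^ m)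
                    = (\<Sum>m\<le>D. evL J (\<lambda>i m. w i ^ m) (?F L' m) * x ^ m)"
    proof
      fix x :: complex
      let ?z = "w(j := x)"
      have ev: "evL J (\<lambda>i m. ?z i ^ m) M = evL J (\<lambda>i m. w i ^ m) M" for M
        by (rule evL_cong) (use insert.hyps in auto)
      have "evL (insert j J) (\<lambda>i m. ?z i ^ m) L = evL (insert j J) (\<lambda>i m. ?z i ^ m) L'"
        using insert.prems by blast
      then have "(\<Sum>m\<le>D. ?z j ^ m * evL J (\<lambda>i m. ?z i ^ m) (?F L m))
               = (\<Sum>m\<le>D. ?z j ^ m * evL J (\<lambda>i m. ?z i ^ m) (?F L' m))"
        by (simp only: evL_split[OF insert.hyps(1,2) bL] evL_split[OF insert.hyps(1,2) bL'])
      then have "(\<Sum>m\<le>D. x ^ m * evL J (\<lambda>i m. w i ^ m) (?F L m))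
               = (\<Sum>m\<le>D. x ^ m * evL J (\<lambda>i m. w i ^ m) (?F L' m))"
        by (simp only: ev fun_upd_same)
      then show "(\<Sum>m\<le>D. evL J (\<lambda>i m. w i ^ m) (?F L m) * x ^ m)
                    = (\<Sum>m\<le>D. evL J (\<lambda>i m. w i ^ m) (?F L' m) * x ^ m)"
        by (simp only: mult.commute)
    qed
    then have "\<forall>m\<le>D. evL J (\<lambda>i m. w i ^ m) (?F L m) = evL J (\<lambda>i m. w i ^ m) (?F L' m)"
      by (subst (asm) polyfun_eq_coeffs)
    then show ?thesis using that by blast
  qed
  have "evL J a (?F L m) = evL J a (?F L' m)" if "m \<le> D" for m
    using insert.IH eqm[OF that] by blast
  then show ?case
    unfolding evL_split[OF insert.hyps(1,2) bL] evL_split[OF insert.hyps(1,2) bL']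
    by (intro sum.cong) auto
qed

lemma evL_expand:
  assumes "finite I"
  shows "evL I (\<lambda>i m. \<Sum>l\<le>D. G m l * u i ^ l) L
       = (\<Sum>f\<in>PiE I (\<lambda>_. {..D}). (\<Prod>i\<in>I. u i ^ f i) * evL I (\<lambda>i m. G m (f i)) L)"
proof (induction L)
  case Nil then show ?case by simp
next
  case (Cons x L)
  obtain c k where x: "x = (c,k)" by (cases x)
  have "c * (\<Prod>i\<in>I. \<Sum>l\<le>D. G (k i) l * u i ^ l)
      = c * (\<Sum>f\<in>PiE I (\<lambda>_. {..D}). \<Prod>i\<in>I. G (k i) (f i) * u i ^ f i)"
    by (subst prod_sum_PiE) (use assms in auto)
  also have "\<dots> = (\<Sum>f\<in>PiE I (\<lambda>_. {..D}). (\<Prod>i\<in>I. u i ^ f i) * (c * (\<Prod>i\<in>I. G (k i) (f i))))"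
    by (simp add: sum_distrib_left prod.distrib algebra_simps)
  finally show ?case using Cons x by (simp add: sum.distrib algebra_simps)
qed

lemma sum_card_le:
  fixes S :: "nat set"
  assumes "finite S"
  shows "(\<Sum>i<card S. i) \<le> \<Sum>S"
  using assms
proof (induction "card S" arbitrary: S)
  case 0 then show ?case by simp
next
  case (Suc n)
  then have ne: "S \<noteq> {}" by auto
  define M where "M = Max S"
  have M: "M \<in> S" using Suc.prems ne by (simp add: M_def)
  have "S \<subseteq> {..M}" using Suc.prems by (auto simp: M_def)
  then have "card S \<le> Suc M" using card_mono[of "{..M}" S] by simp
  then have nM: "n \<le> M" using Suc.hyps by simp
  have c: "card (S - {M}) = n" using Suc.hyps M Suc.prems by simp
  have "(\<Sum>i<n. i) \<le> \<Sum>(S - {M})" using Suc.hyps(1)[of "S - {M}"] c Suc.prems by simp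
  moreover have "\<Sum>S = M + \<Sum>(S - {M})" using sum.remove[OF Suc.prems M, of id] by simp
  ultimately show ?case using nM Suc.hyps(2)[symmetric] by simp
qed

lemma sum_inj_le:
  fixes f :: "nat \<Rightarrow> nat"
  assumes "inj_on f {1..r}"
  shows "(\<Sum>i<r. i) \<le> (\<Sum>i\<in>{1..r}. f i)"
proof -
  have "card (f ` {1..r}) = r" using card_image[OF assms] by simp
  moreover have "(\<Sum>i\<in>{1..r}. f i) = \<Sum>(f ` {1..r})"
    using sum.reindex[OF assms, of id] by simp
  ultimately show ?thesis using sum_card_le[of "f ` {1..r}"] by simp
qed



lemma evL_swap_reindex:
  assumes "i \<in> I" "j \<in> I"
  shows "evL I (\<lambda>l m. a (sw i j l) m) L = evL I a (map (\<lambda>(c,k). (c, k \<circ> sw i j)) L)"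
proof (induction L)
  case (Cons x L)
  obtain c k where x: "x = (c,k)" by (cases x)
  have swI: "sw i j l \<in> I" if "l \<in> I" for l using assms that by (auto simp: sw_def)
  have "(\<Prod>l\<in>I. a (sw i j l) (k l)) = (\<Prod>l\<in>I. a l (k (sw i j l)))"
    by (rule prod.reindex_bij_witness[where i="sw i j" and j="sw i j"]) (use swI in auto)
  then show ?case using Cons x by simp
qed simp

lemma PL_alt:
  assumes "i \<in> {1..r}" "j \<in> {1..r}" "i \<noteq> j" "a i = a j"
  shows "evL {1..r} a (PL (pairs_list r)) = 0"
proof -
  let ?I = "{1..r}" let ?L = "PL (pairs_list r)"
  let ?M = "map (\<lambda>(c,k). (c, k \<circ> sw i j)) ?L"
  have sub: "set (pairs_list r) \<subseteq> ?I \<times> ?I" by (auto simp: set_pairs_list Prs_def)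
  have pw: "evL ?I (\<lambda>l m. z l ^ m) ?L = Vs r z" for z
    using evL_PL_pow[OF _ sub] Vs_list by simp
  have "\<forall>z. evL ?I (\<lambda>l m. z l ^ m) ?M = evL ?I (\<lambda>l m. z l ^ m) (negL ?L)"
  proof
    fix z
    have "evL ?I (\<lambda>l m. z l ^ m) ?M = evL ?I (\<lambda>l m. (z \<circ> sw i j) l ^ m) ?L"
      using evL_swap_reindex[OF assms(1,2), of "\<lambda>l m. z l ^ m" ?L] by simp
    also have "\<dots> = Vs r (z \<circ> sw i j)" by (rule pw)
    also have "\<dots> = - Vs r z" by (rule Vs_sw[OF assms(1-3)])
    finally show "evL ?I (\<lambda>l m. z l ^ m) ?M = evL ?I (\<lambda>l m. z l ^ m) (negL ?L)"
      using pw evL_neg by simp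
  qed
  then have A: "evL ?I a ?M = evL ?I a (negL ?L)" by (intro evL_unique) auto
  have "(\<lambda>l m. a (sw i j l) m) = a" using assms(4) by (auto simp: fun_eq_iff sw_def)
  then have "evL ?I a ?L = evL ?I a ?M" using evL_swap_reindex[OF assms(1,2), of a ?L] by simp
  then have "evL ?I a ?L = - evL ?I a ?L" using A evL_neg by simp
  then show ?thesis by simp
qed

fun TP :: "nat \<Rightarrow> complex poly" where
  "TP 0 = 1" | "TP (Suc m) = pCons 0 (TP m + pderiv (TP m))"

lemma TP_deg: "degree (TP m) \<le> m \<and> coeff (TP m) m = 1"
proof (induction m)
  case 0 show ?case by simp
next
  case (Suc m)
  have d: "degree (TP m + pderiv (TP m)) \<le> m"
    using Suc degree_pderiv[of "TP m"] by (intro degree_add_le) auto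
  have c: "coeff (TP m + pderiv (TP m)) m = 1"
    using Suc by (simp add: coeff_pderiv coeff_eq_0)
  show ?case using d c by (auto intro: order.trans[OF degree_pCons_le])
qed

lemma TP_coeff_gt: "m < l \<Longrightarrow> coeff (TP m) l = 0"
  using TP_deg[of m] by (intro coeff_eq_0) auto

lemma poly_TP_sum:
  assumes "m \<le> D"
  shows "poly (TP m) x = (\<Sum>l\<le>D. coeff (TP m) l * x ^ l)"
proof -
  have "poly (TP m) x = (\<Sum>l\<le>degree (TP m). coeff (TP m) l * x ^ l)" by (rule poly_altdef)
  also have "\<dots> = (\<Sum>l\<le>D. coeff (TP m) l * x ^ l)"
    using TP_deg[of m] assms
    by (intro sum.mono_neutral_left) (auto simp: coeff_eq_0)
  finally show ?thesis .
qed

lemma delta_sum: "m \<le> N \<Longrightarrow> (\<Sum>l\<le>N. (if l = m then 1 else 0) * (x::complex) ^ l) = x ^ m"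
proof -
  assume "m \<le> N"
  have "(\<Sum>l\<le>N. (if l = m then 1 else 0) * (x::complex) ^ l) = (\<Sum>l\<le>N. if l = m then x ^ l else 0)"
    by (intro sum.cong) auto
  then show ?thesis using \<open>m \<le> N\<close> by (simp add: sum.delta)
qed

lemma crux:
  assumes fin: "finite I"
  and hom: "\<forall>(c,k)\<in>set L. (\<Sum>i\<in>I. k i) = N"
  and low: "\<forall>f. inj_on f I \<longrightarrow> N \<le> (\<Sum>i\<in>I. f i)"
  and alt: "\<forall>a i j. i \<in> I \<longrightarrow> j \<in> I \<longrightarrow> i \<noteq> j \<longrightarrow> a i = a j \<longrightarrow> evL I a L = 0"
  shows "evL I (\<lambda>i m. poly (TP m) (u i)) L = evL I (\<lambda>i m. u i ^ m) L"
proof -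
  have kb: "k i \<le> N" if "(c,k) \<in> set L" "i \<in> I" for c k i
  proof -
    have "k i \<le> (\<Sum>i\<in>I. k i)" by (rule member_le_sum) (use that fin in auto)
    then show ?thesis using hom that by auto
  qed
  have e1: "evL I (\<lambda>i m. poly (TP m) (u i)) L = evL I (\<lambda>i m. \<Sum>l\<le>N. coeff (TP m) l * u i ^ l) L"
    by (rule evL_term_cong) (use kb in \<open>auto intro!: prod.cong simp: poly_TP_sum\<close>)
  have e2: "evL I (\<lambda>i m. u i ^ m) L = evL I (\<lambda>i m. \<Sum>l\<le>N. (if l = m then 1 else 0) * u i ^ l) L"
    by (rule evL_term_cong) (use kb in \<open>auto intro!: prod.cong simp: delta_sum\<close>)
  have key: "evL I (\<lambda>i m. coeff (TP m) (f i)) L = evL I (\<lambda>i m. if f i = m then 1 else 0) L" for f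
  proof (cases "inj_on f I")
    case inj: True
    show ?thesis
    proof (rule evL_term_cong, intro ballI, clarify)
      fix c k assume ck: "(c,k) \<in> set L"
      show "(\<Prod>i\<in>I. coeff (TP (k i)) (f i)) = (\<Prod>i\<in>I. if f i = k i then 1 else 0)"
      proof (cases "\<forall>i\<in>I. f i \<le> k i")
        case True
        have "\<forall>i\<in>I. f i = k i"
        proof (rule ccontr)
          assume "\<not> (\<forall>i\<in>I. f i = k i)"
          then obtain i where "i \<in> I" "f i < k i" using True by (meson le_neq_implies_less)
          then have "(\<Sum>i\<in>I. f i) < (\<Sum>i\<in>I. k i)" using sum_strict_mono_ex1[OF fin] True by blast
          then show False using hom ck low inj by fastforce
        qed
        then show ?thesis using TP_deg by simp
      next
        case False
        then obtain i where i: "i \<in> I" "k i < f i" by (auto simp: not_le)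
        have "(\<Prod>i\<in>I. coeff (TP (k i)) (f i)) = 0" using i fin TP_coeff_gt by (intro prod_zero) auto
        moreover have "(\<Prod>i\<in>I. if f i = k i then 1 else 0 :: complex) = 0" using i fin by (intro prod_zero) force+
        ultimately show ?thesis by simp
      qed
    qed
  next
    case False
    then obtain i j where ij: "i\<in>I" "j\<in>I" "i\<noteq>j" "f i = f j" by (auto simp: inj_on_def)
    have "evL I (\<lambda>i m. coeff (TP m) (f i)) L = 0"
      using alt[rule_format, of i j "\<lambda>i m. coeff (TP m) (f i)"] ij by simp
    moreover have "evL I (\<lambda>i m. if f i = m then 1 else 0) L = 0"
      using alt[rule_format, of i j "\<lambda>i m. if f i = m then 1 else 0"] ij by simp
    ultimately show ?thesis by simp
  qed
  show ?thesis
    unfolding e1 e2 evL_expand[OF fin, of "\<lambda>m l. coeff (TP m) l"]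
      evL_expand[OF fin, of "\<lambda>m l. if l = m then 1 else 0"]
    by (intro sum.cong refl) (simp add: key)
qed



definition hh :: "nat \<Rightarrow> complex \<Rightarrow> complex \<Rightarrow> complex" where
  "hh m a z = exp (a*z) * poly (TP m) (a*z)"
definition hd :: "nat \<Rightarrow> complex \<Rightarrow> complex \<Rightarrow> complex" where
  "hd m a z = a * exp (a*z) * (poly (TP m) (a*z) + poly (pderiv (TP m)) (a*z))"
definition H :: "(nat \<Rightarrow> complex) \<Rightarrow> (nat \<Rightarrow> complex) \<Rightarrow> nat \<Rightarrow> nat \<Rightarrow> complex" where
  "H \<alpha> s = (\<lambda>i m. hh m (\<alpha> i) (s i))"

lemma hh_deriv: "((\<lambda>z. hh m a z) has_field_derivative hd m a z) (at z)"
proof -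
  have 1: "((\<lambda>z. exp (a*z)) has_field_derivative exp (a*z) * a) (at z)"
    by (auto intro!: derivative_eq_intros)
  have 2: "((\<lambda>z. poly (TP m) (a*z)) has_field_derivative poly (pderiv (TP m)) (a*z) * a) (at z)"
    by (rule DERIV_chain2[OF poly_DERIV]) (auto intro!: derivative_eq_intros)
  show ?thesis unfolding hh_def hd_def
    using DERIV_mult[OF 1 2] by (simp add: algebra_simps)
qed

lemma hh_Suc: "z * hd m a z = hh (Suc m) a z"
  by (simp add: hh_def hd_def algebra_simps)

lemma evL_deriv:
  assumes "finite I" "j \<in> I"
  shows "((\<lambda>x. evL I (H \<alpha> (t(j:=x))) L) has_field_derivative
          evL I ((H \<alpha> (t(j:=x)))(j := \<lambda>m. hd m (\<alpha> j) x)) L) (at x)"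
proof (induction L)
  case Nil then show ?case by simp
next
  case (Cons p L)
  obtain c k where p: "p = (c,k)" by (cases p)
  define Q where "Q = (\<Prod>i\<in>I-{j}. hh (k i) (\<alpha> i) (t i))"
  have e1: "(\<Prod>i\<in>I. H \<alpha> (t(j:=y)) i (k i)) = hh (k j) (\<alpha> j) y * Q" for y
    unfolding Q_def H_def by (subst prod.remove[OF assms]) (auto intro!: prod.cong)
  have e2: "(\<Prod>i\<in>I. ((H \<alpha> (t(j:=x)))(j := \<lambda>m. hd m (\<alpha> j) x)) i (k i)) = hd (k j) (\<alpha> j) x * Q"
    unfolding Q_def H_def by (subst prod.remove[OF assms]) (auto intro!: prod.cong)
  have d: "((\<lambda>y. c * (hh (k j) (\<alpha> j) y * Q)) has_field_derivative c * (hd (k j) (\<alpha> j) x * Q)) (at x)"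
    by (intro DERIV_cmult DERIV_cmult_right hh_deriv)
  show ?case unfolding p evL.simps e1 e2
    by (rule DERIV_add[OF d Cons.IH])
qed

lemma theta_evL:
  assumes "finite I" "j \<in> I"
  shows "theta j (\<lambda>s. evL I (H \<alpha> s) L) = (\<lambda>s. evL I (H \<alpha> s) (shiftL j L))"
proof
  fix t
  have "partial j (\<lambda>s. evL I (H \<alpha> s) L) t = evL I ((H \<alpha> t)(j := \<lambda>m. hd m (\<alpha> j) (t j))) L"
    unfolding partial_def using DERIV_imp_deriv[OF evL_deriv[OF assms, of \<alpha> t L "t j"]] by simp
  then have "theta j (\<lambda>s. evL I (H \<alpha> s) L) t = t j * evL I ((H \<alpha> t)(j := \<lambda>m. hd m (\<alpha> j) (t j))) L"
    by (simp add: theta_def)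
  also have "\<dots> = evL I (((H \<alpha> t)(j := \<lambda>m. hd m (\<alpha> j) (t j)))(j := \<lambda>m. t j * ((H \<alpha> t)(j := \<lambda>m. hd m (\<alpha> j) (t j))) j m)) L"
    by (rule evL_scale[OF assms, symmetric])
  also have "((H \<alpha> t)(j := \<lambda>m. hd m (\<alpha> j) (t j)))(j := \<lambda>m. t j * ((H \<alpha> t)(j := \<lambda>m. hd m (\<alpha> j) (t j))) j m)
      = (H \<alpha> t)(j := \<lambda>m. H \<alpha> t j (Suc m))"
    by (auto simp: fun_eq_iff hh_Suc H_def)
  also have "evL I ((H \<alpha> t)(j := \<lambda>m. H \<alpha> t j (Suc m))) L = evL I (H \<alpha> t) (shiftL j L)"
    by (rule evL_shift[symmetric])
  finally show "theta j (\<lambda>s. evL I (H \<alpha> s) L) t = evL I (H \<alpha> t) (shiftL j L)" .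
qed

lemma foldr_evL:
  assumes "finite I" "set ps \<subseteq> I \<times> I"
  shows "foldr (\<lambda>(i, j) g. theta_diff i j g) ps (\<lambda>s. evL I (H \<alpha> s) [(1, \<lambda>_. 0)])
       = (\<lambda>s. evL I (H \<alpha> s) (PL ps))"
  using assms(2)
proof (induction ps)
  case Nil then show ?case by (simp add: PL_def)
next
  case (Cons p ps)
  obtain i j where p: "p = (i,j)" by (cases p)
  have ij: "i \<in> I" "j \<in> I" using Cons.prems p by auto
  have IH: "foldr (\<lambda>(i, j) g. theta_diff i j g) ps (\<lambda>s. evL I (H \<alpha> s) [(1, \<lambda>_. 0)])
       = (\<lambda>s. evL I (H \<alpha> s) (PL ps))" using Cons by auto
  let ?F = "\<lambda>(i, j) g. theta_diff i j g" let ?B = "\<lambda>s. evL I (H \<alpha> s) [(1, \<lambda>_. 0)]"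
  have "foldr ?F (p#ps) ?B = theta_diff i j (foldr ?F ps ?B)" by (simp add: p)
  also have "\<dots> = theta_diff i j (\<lambda>s. evL I (H \<alpha> s) (PL ps))" by (simp only: IH)
  also have "\<dots> = (\<lambda>s. evL I (H \<alpha> s) (PL (p#ps)))"
    unfolding theta_diff_def theta_evL[OF assms(1) ij(1)] theta_evL[OF assms(1) ij(2)]
    by (simp add: p PL_Cons stepL_def evL_neg)
  finally show ?case .
qed

lemma evL_H_factor:
  "evL I (H \<alpha> t) L = (\<Prod>i\<in>I. exp (\<alpha> i * t i)) * evL I (\<lambda>i m. poly (TP m) (\<alpha> i * t i)) L"
  by (induction I "H \<alpha> t" L rule: evL.induct)
     (auto simp: H_def hh_def prod.distrib algebra_simps)

theorem mainTheorem14: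
  fixes r :: nat and \<alpha> :: "nat \<Rightarrow> complex" and t :: "nat \<Rightarrow> complex"
  shows "vdm_op r (\<lambda>s. exp (\<Sum>i = 1..r. \<alpha> i * s i)) t
       = exp (\<Sum>i = 1..r. \<alpha> i * t i)
         * (\<Prod>(i, j) \<in> {(i, j). 1 \<le> i \<and> i < j \<and> j \<le> r}. \<alpha> i * t i - \<alpha> j * t j)"
proof -
  let ?I = "{1..r}" let ?L = "PL (pairs_list r)"
  have fin: "finite ?I" by simp
  have sub: "set (pairs_list r) \<subseteq> ?I \<times> ?I" by (auto simp: set_pairs_list Prs_def)
  have base: "(\<lambda>s. exp (\<Sum>i = 1..r. \<alpha> i * s i)) = (\<lambda>s. evL ?I (H \<alpha> s) [(1, \<lambda>_. 0)])"
    by (auto simp: fun_eq_iff H_def hh_def exp_sum)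
  have "vdm_op r (\<lambda>s. exp (\<Sum>i = 1..r. \<alpha> i * s i)) t = evL ?I (H \<alpha> t) ?L"
    unfolding vdm_op_def base foldr_evL[OF fin sub] ..
  also have "\<dots> = exp (\<Sum>i = 1..r. \<alpha> i * t i) * evL ?I (\<lambda>i m. poly (TP m) (\<alpha> i * t i)) ?L"
    by (simp add: evL_H_factor exp_sum)
  also have "evL ?I (\<lambda>i m. poly (TP m) (\<alpha> i * t i)) ?L = evL ?I (\<lambda>i m. (\<alpha> i * t i) ^ m) ?L"
  proof (rule crux[OF fin])
    show "\<forall>(c,k)\<in>set ?L. (\<Sum>i\<in>?I. k i) = length (pairs_list r)"
      by (rule PL_hom[OF fin sub])
    show "\<forall>f. inj_on f ?I \<longrightarrow> length (pairs_list r) \<le> (\<Sum>i\<in>?I. f i)"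
      using sum_inj_le length_pairs_list by simp
    show "\<forall>a i j. i \<in> ?I \<longrightarrow> j \<in> ?I \<longrightarrow> i \<noteq> j \<longrightarrow> a i = a j \<longrightarrow> evL ?I a ?L = 0"
      using PL_alt by blast
  qed
  also have "\<dots> = Vs r (\<lambda>i. \<alpha> i * t i)"
    using evL_PL_pow[OF fin sub, of "\<lambda>i. \<alpha> i * t i"] Vs_list by simp
  finally show ?thesis by (simp add: Vs_def Prs_def)
qed

end
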